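(* Let $(G,\cdot)$ be a loop with identity $e$ and $(H,\cdot)$ a non-trivial subloop such that $(xs\cdot z)s=x(sz\cdot s)$ for all $x,z\in G$, $s\in H$, and such that $s^2\in N_\rho(G)\cap H$ for all $s\in H$. Then for every $s\in H$, the map $L_sR_s^{-1}$ is a second Smarandache semi-automorphism of $G_H$, i.e. $e(L_sR_s^{-1})=e$ and $(ty\cdot t)L_sR_s^{-1}=(tL_sR_s^{-1}\cdot yL_sR_s^{-1})\,tL_sR_s^{-1}$ for all $y\in G$, $t\in H$.
   Context: Juxtaposition binds more tightly than $\cdot$. Maps are written on the right and composed left to right; $xR_s=x\cdot s$, $xL_s=s\cdot x$, $s^2=ss$. The right nucleus is $N_\rho(G)=\{a\in G: y\cdot xa=yx\cdot a\ \forall x,y\in G\}$. *)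

theory Defs
  imports Main
begin

definition loop :: "'a set \<Rightarrow> ('a \<Rightarrow> 'a \<Rightarrow> 'a) \<Rightarrow> 'a \<Rightarrow> bool" where
  "loop G m e \<longleftrightarrow> e \<in> G \<and> (\<forall>x\<in>G. \<forall>y\<in>G. m x y \<in> G)
     \<and> (\<forall>x\<in>G. m e x = x \<and> m x e = x)
     \<and> (\<forall>a\<in>G. \<forall>b\<in>G. \<exists>!x. x \<in> G \<and> m a x = b)
     \<and> (\<forall>a\<in>G. \<forall>b\<in>G. \<exists>!y. y \<in> G \<and> m y a = b)"

definition subloop :: "'a set \<Rightarrow> 'a set \<Rightarrow> ('a \<Rightarrow> 'a \<Rightarrow> 'a) \<Rightarrow> 'a \<Rightarrow> bool" where
  "subloop H G m e \<longleftrightarrow> H \<subseteq> G \<and> loop H m e"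

definition rdiv :: "'a set \<Rightarrow> ('a \<Rightarrow> 'a \<Rightarrow> 'a) \<Rightarrow> 'a \<Rightarrow> 'a \<Rightarrow> 'a" where
  "rdiv G m b a = (THE z. z \<in> G \<and> m z a = b)"

definition right_nucleus :: "'a set \<Rightarrow> ('a \<Rightarrow> 'a \<Rightarrow> 'a) \<Rightarrow> 'a set" where
  "right_nucleus G m = {a \<in> G. \<forall>x\<in>G. \<forall>y\<in>G. m y (m x a) = m (m y x) a}"

text \<open>The map L_s R_s^{-1} (maps act on the right, composed left to right): x \<mapsto> (s x) / s.\<close>
definition LR_inv :: "'a set \<Rightarrow> ('a \<Rightarrow> 'a \<Rightarrow> 'a) \<Rightarrow> 'a \<Rightarrow> 'a \<Rightarrow> 'a" where
  "LR_inv G m s x = rdiv G m (m s x) s"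

end

theory Submission
  imports Defs
begin

lemma rdiv_prop:
  assumes "loop G m e" "a \<in> G" "b \<in> G"
  shows "rdiv G m b a \<in> G \<and> m (rdiv G m b a) a = b"
proof -
  from assms(1) have "\<forall>a\<in>G. \<forall>b\<in>G. \<exists>!y. y \<in> G \<and> m y a = b" unfolding loop_def by (elim conjE)
  then have "\<exists>!y. y \<in> G \<and> m y a = b" using assms(2,3) by simp
  then show ?thesis unfolding rdiv_def by (rule theI')
qed

lemma rdiv_eq:
  assumes "loop G m e" "a \<in> G" "b \<in> G" "z \<in> G" "m z a = b"
  shows "rdiv G m b a = z"
proof -
  from assms(1) have "\<forall>a\<in>G. \<forall>b\<in>G. \<exists>!y. y \<in> G \<and> m y a = b" unfolding loop_def by (elim conjE)
  then have "\<exists>!y. y \<in> G \<and> m y a = b" using assms(2,3) by simp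
  then show ?thesis unfolding rdiv_def using assms(4,5) by (simp add: the1_equality)
qed

lemma loopD:
  assumes "loop G m e"
  shows "e \<in> G" "\<And>x y. x \<in> G \<Longrightarrow> y \<in> G \<Longrightarrow> m x y \<in> G"
    "\<And>x. x \<in> G \<Longrightarrow> m e x = x" "\<And>x. x \<in> G \<Longrightarrow> m x e = x"
proof -
  from assms have a: "e \<in> G" unfolding loop_def by (elim conjE) assumption
  from assms have b: "\<forall>x\<in>G. \<forall>y\<in>G. m x y \<in> G" unfolding loop_def by (elim conjE) assumption
  from assms have c: "\<forall>x\<in>G. m e x = x \<and> m x e = x" unfolding loop_def by (elim conjE) assumption
  show "e \<in> G" by (fact a)
  show "\<And>x y. x \<in> G \<Longrightarrow> y \<in> G \<Longrightarrow> m x y \<in> G" using b by simp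
  show "\<And>x. x \<in> G \<Longrightarrow> m e x = x" using c by simp
  show "\<And>x. x \<in> G \<Longrightarrow> m x e = x" using c by simp
qed

lemma rcancel:
  assumes "loop G m e" "a \<in> G" "x \<in> G" "y \<in> G" "m x a = m y a"
  shows "x = y"
proof -
  have c: "m y a \<in> G" using loopD(2)[OF assms(1,4,2)] .
  have "rdiv G m (m y a) a = x" using rdiv_eq[OF assms(1,2) c assms(3,5)] .
  moreover have "rdiv G m (m y a) a = y" using rdiv_eq[OF assms(1,2) c assms(4)] by simp
  ultimately show ?thesis by simp
qed

theorem corollary3p2:
  fixes G H :: "'a set" and m :: "'a \<Rightarrow> 'a \<Rightarrow> 'a" and e :: 'a
  assumes "loop G m e"
    and "subloop H G m e"
    and "H \<noteq> {e}"
    and "\<forall>x\<in>G. \<forall>z\<in>G. \<forall>s\<in>H. m (m (m x s) z) s = m x (m (m s z) s)"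
    and "\<forall>s\<in>H. m s s \<in> right_nucleus G m \<inter> H"
  shows "\<forall>s\<in>H. LR_inv G m s e = e \<and>
           (\<forall>y\<in>G. \<forall>t\<in>H. LR_inv G m s (m (m t y) t)
               = m (m (LR_inv G m s t) (LR_inv G m s y)) (LR_inv G m s t))"
proof (rule ballI, rule conjI)
  fix s assume sH: "s \<in> H"
  have HG: "H \<subseteq> G" using assms(2) unfolding subloop_def by blast
  have sG: "s \<in> G" using sH HG by blast
  have L: "e \<in> G" "\<And>x y. x \<in> G \<Longrightarrow> y \<in> G \<Longrightarrow> m x y \<in> G"
    "\<And>x. x \<in> G \<Longrightarrow> m e x = x" "\<And>x. x \<in> G \<Longrightarrow> m x e = x"
    using loopD[OF assms(1)] by auto
  have A: "\<And>x z u. x \<in> G \<Longrightarrow> z \<in> G \<Longrightarrow> u \<in> H \<Longrightarrow> m (m (m x u) z) u = m x (m (m u z) u)"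
    using assms(4) by blast
  have N: "\<And>x y. x \<in> G \<Longrightarrow> y \<in> G \<Longrightarrow> m y (m x (m s s)) = m (m y x) (m s s)"
    using assms(5) sH unfolding right_nucleus_def by blast
  have sq: "m (m x s) s = m x (m s s)" if xG: "x \<in> G" for x
  proof -
    have "m (m (m x s) e) s = m x (m (m s e) s)" using A[OF xG L(1) sH] .
    moreover have "m (m x s) e = m x s" using L(4) L(2)[OF xG sG] by simp
    moreover have "m s e = s" using L(4) sG by simp
    ultimately show ?thesis by simp
  qed
  show "LR_inv G m s e = e"
    unfolding LR_inv_def using rdiv_eq[OF assms(1) sG _ L(1)] L sG by simp
  show "\<forall>y\<in>G. \<forall>t\<in>H. LR_inv G m s (m (m t y) t)
               = m (m (LR_inv G m s t) (LR_inv G m s y)) (LR_inv G m s t)"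
  proof (intro ballI)
    fix y t assume yG: "y \<in> G" and tH: "t \<in> H"
    have tG: "t \<in> G" using tH HG by blast
    define a where "a = LR_inv G m s t"
    define b where "b = LR_inv G m s y"
    have aG: "a \<in> G" and as: "m a s = m s t"
      using rdiv_prop[OF assms(1) sG L(2)[OF sG tG]] unfolding a_def LR_inv_def by auto
    have bG: "b \<in> G" and bs: "m b s = m s y"
      using rdiv_prop[OF assms(1) sG L(2)[OF sG yG]] unfolding b_def LR_inv_def by auto
    have abG: "m a b \<in> G" using L(2) aG bG by blast
    have "m (m (m a b) s) s = m (m a b) (m s s)" using sq abG by simp
    also have "\<dots> = m a (m b (m s s))" using N aG bG by simp
    also have "\<dots> = m a (m (m b s) s)" using sq bG by simp
    also have "\<dots> = m a (m (m s y) s)" using bs by simp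
    also have "\<dots> = m (m (m a s) y) s" using A[OF aG yG sH] by simp
    also have "\<dots> = m (m (m s t) y) s" using as by simp
    finally have e1: "m (m a b) s = m (m s t) y"
      by (rule rcancel[OF assms(1) sG L(2)[OF abG sG] L(2)[OF L(2)[OF sG tG] yG]])
    have aba: "m (m a b) a \<in> G" using L(2) abG aG by blast
    have "m (m (m (m a b) a) s) s = m (m (m a b) a) (m s s)" using sq aba by simp
    also have "\<dots> = m (m a b) (m a (m s s))" using N aG abG by simp
    also have "\<dots> = m (m a b) (m (m a s) s)" using sq aG by simp
    also have "\<dots> = m (m a b) (m (m s t) s)" using as by simp
    also have "\<dots> = m (m (m (m a b) s) t) s" using A[OF abG tG sH] by simp
    also have "\<dots> = m (m (m (m s t) y) t) s" using e1 by simp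
    also have "\<dots> = m (m s (m (m t y) t)) s" using A[OF sG yG tH] by simp
    finally have "m (m (m a b) a) s = m s (m (m t y) t)"
      by (rule rcancel[OF assms(1) sG L(2)[OF aba sG] L(2)[OF sG L(2)[OF L(2)[OF tG yG] tG]]])
    then have "LR_inv G m s (m (m t y) t) = m (m a b) a"
      unfolding LR_inv_def by (rule rdiv_eq[OF assms(1) sG L(2)[OF sG L(2)[OF L(2)[OF tG yG] tG]] aba])
    then show "LR_inv G m s (m (m t y) t) = m (m (LR_inv G m s t) (LR_inv G m s y)) (LR_inv G m s t)"
      unfolding a_def b_def .
  qed
qed

end
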